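(* Let $k\ge 0$, $m=2k+1$, and $ER_m(\hat K)=P_m(\hat K)+\mathrm{span}\{\hat x^{m}\hat y-\hat x\hat y^{m},\ \hat x^{m+1}-\hat y^{m+1}\}$. Suppose $\hat v\in ER_m(\hat K)$ satisfies $\int_{\hat e}\hat v\,q\,ds=0$ for every $q\in P_{2k}(\hat e)$ and every edge $\hat e$ of $\hat K$, and $\hat v$ vanishes at all points of $I$. Then $\hat v\equiv 0$.
   Context: $\hat K=[-1,1]^2$; $P_n(M)$ denotes polynomials of degree $\le n$ on $M$ (for an edge, polynomials of degree $\le n$ in the edge variable). $I$ is a set of $(2k-1)(k-1)$ interior points of $\hat K$ unisolvent for $P_{2k-3}(\hat K)$ (every polynomial in $P_{2k-3}(\hat K)$ is uniquely determined by its values on $I$); $I=\emptyset$ when $k\le 1$. *)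

theory Defs
  imports "HOL-Analysis.Analysis" "HOL-Computational_Algebra.Polynomial"
begin

definition Khat :: "(real \<times> real) set" where
  "Khat = {(x, y). -1 \<le> x \<and> x \<le> 1 \<and> -1 \<le> y \<and> y \<le> 1}"

definition Khat_interior :: "(real \<times> real) set" where
  "Khat_interior = {(x, y). -1 < x \<and> x < 1 \<and> -1 < y \<and> y < 1}"

definition P2 :: "nat \<Rightarrow> (real \<times> real \<Rightarrow> real) set" where
  "P2 n = {f. \<exists>c :: nat \<Rightarrow> nat \<Rightarrow> real. \<forall>x y.
      f (x, y) = (\<Sum>(i, j)\<in>{(i, j). i + j \<le> n}. c i j * x ^ i * y ^ j)}"

definition ER :: "nat \<Rightarrow> (real \<times> real \<Rightarrow> real) set" where
  "ER m = {f. \<exists>p\<in>P2 m. \<exists>a b :: real. \<forall>x y.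
      f (x, y) = p (x, y) + a * (x ^ m * y - x * y ^ m) + b * (x ^ (m + 1) - y ^ (m + 1))}"

text \<open>The four edges of K, parametrised by arc length over [-1,1] (unit speed).\<close>
definition edges :: "(real \<Rightarrow> real \<times> real) set" where
  "edges = {(\<lambda>t. (t, -1)), (\<lambda>t. (1, t)), (\<lambda>t. (t, 1)), (\<lambda>t. (-1, t))}"

definition unisolvent :: "(real \<times> real) set \<Rightarrow> (real \<times> real \<Rightarrow> real) set \<Rightarrow> bool" where
  "unisolvent S V \<longleftrightarrow> (\<forall>p\<in>V. \<forall>q\<in>V. (\<forall>z\<in>S. p z = q z) \<longrightarrow> p = q)"

end

theory Submission
  imports Defs
begin


definition J :: "real poly \<Rightarrow> real" where
  "J p = integral {-1..1} (\<lambda>t. poly p t)"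

lemma J_integrable: "(\<lambda>t. poly p t) integrable_on {-1..1::real}"
  by (intro integrable_continuous_real continuous_intros)

lemma J_add: "J (p + q) = J p + J q"
proof -
  have "poly (p + q) = (\<lambda>t. poly p t + poly q t)" by (simp add: fun_eq_iff)
  then show ?thesis unfolding J_def using integral_add[OF J_integrable J_integrable] by simp
qed

lemma J_smult: "J (smult c p) = c * J p"
proof -
  have "poly (smult c p) = (\<lambda>t. c * poly p t)" by (simp add: fun_eq_iff)
  then show ?thesis unfolding J_def by simp
qed

lemma J_minus: "J (p - q) = J p - J q"
proof -
  have "poly (p - q) = (\<lambda>t. poly p t - poly q t)" by (simp add: fun_eq_iff)
  then show ?thesis unfolding J_def using integral_diff[OF J_integrable J_integrable] by simp
qed

lemma J_pderiv: "J (pderiv P) = poly P 1 - poly P (-1)"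
proof -
  have "((\<lambda>t. poly (pderiv P) t) has_integral poly P 1 - poly P (-1)) {-1..1}"
    by (rule fundamental_theorem_of_calculus)
       (auto simp: has_real_derivative_iff_has_vector_derivative[symmetric]
             intro: DERIV_subset poly_DERIV)
  then show ?thesis unfolding J_def by (rule integral_unique)
qed

lemma J_parts: "J (pderiv F * G) = poly F 1 * poly G 1 - poly F (-1) * poly G (-1) - J (F * pderiv G)"
proof -
  have "J (pderiv (F * G)) = J (pderiv F * G) + J (F * pderiv G)"
    by (simp add: pderiv_mult J_add algebra_simps)
  then show ?thesis using J_pderiv[of "F*G"] by simp
qed

lemma J_nonneg_zero:
  assumes nn: "\<And>x. -1 < x \<Longrightarrow> x < 1 \<Longrightarrow> 0 \<le> poly s x" and z: "J s = 0"
  and x: "-1 \<le> x" "x \<le> 1"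
  shows "poly s x = 0"
proof -
  have "((\<lambda>t. poly s t) has_integral 0) (cbox (-1) 1)"
    using z J_integrable[of s] unfolding J_def
    by (metis cbox_interval has_integral_integral)
  moreover have "continuous_on {-1..1} (\<lambda>t. poly s t)" by (intro continuous_intros)
  ultimately show ?thesis
    using has_integral_0_cbox_imp_0[of "-1::real" 1 "\<lambda>t. poly s t" x] nn x
    by (auto intro!: continuous_intros simp: box_real cbox_interval)
qed

lemma poly_zero_on_interval:
  assumes "\<And>x. -1 < x \<Longrightarrow> x < (1::real) \<Longrightarrow> poly r x = 0"
  shows "r = 0"
proof (rule ccontr)
  assume "r \<noteq> 0"
  then have "finite {x. poly r x = 0}" by (rule poly_roots_finite)
  moreover have "{-1<..<(1::real)} \<subseteq> {x. poly r x = 0}" using assms by auto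
  ultimately show False by (meson finite_subset infinite_Ioo_iff less_trans neg_less_0_iff_less zero_less_one)
qed

lemma J_sq_zero: assumes "J (r * r) = 0" shows "r = 0"
proof (rule poly_zero_on_interval)
  fix x :: real assume "-1 < x" "x < 1"
  then have "poly (r*r) x = 0" using J_nonneg_zero[OF _ assms] by simp
  then show "poly r x = 0" by simp
qed

lemma J_wsq_zero: assumes "J ([:1,0,-1:] * r * r) = 0" shows "r = 0"
proof (rule poly_zero_on_interval)
  have nn: "0 \<le> poly ([:1,0,-1:] * r * r) y" if y: "-1 < y" "y < 1" for y :: real
  proof -
    have "0 \<le> 1 - y*y" using y abs_square_le_1[of y] by (simp add: power2_eq_square abs_le_iff)
    moreover have "poly ([:1,0,-1:] * r * r) y = (1 - y*y) * (poly r y * poly r y)"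
      by (simp add: algebra_simps)
    ultimately show ?thesis by (simp only:) (simp add: mult_nonneg_nonneg)
  qed
  fix x :: real assume x: "-1 < x" "x < 1"
  have "poly ([:1,0,-1:] * r * r) x = 0"
    using x by (intro J_nonneg_zero[OF nn assms]) auto
  moreover have "0 < (1-x)*(1+x)" using x by (intro mult_pos_pos) auto
  then have "1 - x*x \<noteq> 0" by (simp add: algebra_simps)
  ultimately show "poly r x = 0" by (simp add: algebra_simps)
qed



definition Wp :: "real poly" where "Wp = [:-1,0,1:]"
definition R :: "nat \<Rightarrow> real poly" where "R n = (pderiv ^^ n) (Wp ^ n)"

lemma dvd_pderiv:
  assumes "[:-a,1:]^(Suc k) dvd (p :: real poly)" shows "[:-a,1:]^k dvd pderiv p"
proof -
  obtain s where s: "p = [:-a,1:]^(Suc k) * s" using assms by (auto elim: dvdE)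
  define X where "X = [:-a,1::real:]"
  have pX: "pderiv X = 1" by (simp add: X_def pderiv_pCons)
  have "pderiv p = X^(Suc k) * pderiv s + s * (smult (of_nat (Suc k)) (X^k) * pderiv X)"
    by (simp only: s X_def pderiv_mult pderiv_power_Suc)
  also have "\<dots> = X^k * (X * pderiv s + smult (of_nat (Suc k)) s)"
    by (simp add: pX algebra_simps)
  finally show ?thesis by (simp add: X_def)
qed

lemma dvd_pderiv_iter:
  "[:-a,1:]^(k+i) dvd (p :: real poly) \<Longrightarrow> [:-a,1:]^k dvd (pderiv^^i) p"
proof (induction i arbitrary: k)
  case 0 then show ?case by simp
next
  case (Suc i)
  have "[:-a,1:]^(Suc k + i) dvd p" using Suc.prems by simp
  then have "[:-a,1:]^(Suc k) dvd (pderiv^^i) p" by (rule Suc.IH)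
  then show ?case by (simp add: dvd_pderiv)
qed

lemma Wp_factor: "Wp = [:-1,1:] * [:1,1:]"
  by (simp add: Wp_def)

lemma R_vanish:
  assumes "i < n"
  shows "poly ((pderiv^^i) (Wp^n)) 1 = 0" "poly ((pderiv^^i) (Wp^n)) (-1) = 0"
proof -
  have e0: "Wp^n = [:-1,1:]^n * [:1,1:]^n"
    unfolding Wp_factor power_mult_distrib ..
  have e: "Wp^n = [:-1,1:]^((n-i)+i) * [:1,1:]^((n-i)+i)"
    using assms e0 by simp
  have "[:-1,1:]^(n-i) dvd (pderiv^^i) (Wp^n)"
    by (rule dvd_pderiv_iter) (simp add: e)
  moreover have "[:-1,1:] dvd [:-1,1:]^(n-i)" using assms by (simp add: dvd_power)
  ultimately have "[:-1,1:] dvd (pderiv^^i) (Wp^n)" by (rule dvd_trans[rotated])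
  then show "poly ((pderiv^^i) (Wp^n)) 1 = 0" by (simp add: poly_eq_0_iff_dvd)
  have "[:-(-1),1:]^(n-i) dvd (pderiv^^i) (Wp^n)"
    by (rule dvd_pderiv_iter) (simp add: e)
  moreover have "[:-(-1),1:] dvd [:-(-1),1:]^(n-i)" using assms by (simp add: dvd_power)
  ultimately have "[:-(-1),1:] dvd (pderiv^^i) (Wp^n)" by (rule dvd_trans[rotated])
  then show "poly ((pderiv^^i) (Wp^n)) (-1) = 0" by (simp only: poly_eq_0_iff_dvd)
qed

lemma degree_pderiv_iter: "degree ((pderiv^^j) (q::real poly)) = degree q - j"
  by (induction j) (auto simp: degree_pderiv)

lemma pderiv_iter_zero: "degree (q::real poly) < j \<Longrightarrow> (pderiv^^j) q = 0"
proof (induction j)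
  case 0 then show ?case by simp
next
  case (Suc j)
  show ?case
  proof (cases "degree q < j")
    case True then show ?thesis using Suc by simp
  next
    case False
    then have "degree ((pderiv^^j) q) = 0" using Suc.prems by (simp add: degree_pderiv_iter)
    then show ?thesis by (simp add: pderiv_eq_0_iff)
  qed
qed

lemma R_parts:
  "j \<le> n \<Longrightarrow> J (R n * q) = (-1)^j * J ((pderiv^^(n-j)) (Wp^n) * (pderiv^^j) q)"
proof (induction j)
  case 0 then show ?case by (simp add: R_def)
next
  case (Suc j)
  define F where "F = (pderiv^^(n - Suc j)) (Wp^n)"
  have nj: "n - j = Suc (n - Suc j)" using Suc.prems by simp
  have F: "(pderiv^^(n-j)) (Wp^n) = pderiv F" unfolding F_def nj by simp
  have "J (pderiv F * (pderiv^^j) q) = - J (F * (pderiv^^(Suc j)) q)"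
    using J_parts[of F "(pderiv^^j) q"] R_vanish[of "n - Suc j" n] Suc.prems
    by (simp add: F_def)
  then show ?case using Suc by (simp add: F, simp add: F_def)
qed

lemma J_zero: "J 0 = 0" by (simp add: J_def)

lemma R_orth: "degree q < n \<Longrightarrow> J (R n * q) = 0"
  using R_parts[of n n q] pderiv_iter_zero[of q n] by (simp add: J_zero)

lemma coeff_pderiv_iter:
  "coeff ((pderiv^^j) p) i = pochhammer (of_nat (Suc i)) j * coeff (p::real poly) (i+j)"
proof (induction j arbitrary: i)
  case 0 then show ?case by simp
next
  case (Suc j)
  show ?case by (simp add: coeff_pderiv Suc pochhammer_rec algebra_simps)
qed

lemma degree_Wp_pow: "degree (Wp^n) = 2*n"
  by (simp add: Wp_def degree_power_eq)

lemma lead_Wp_pow: "coeff (Wp^n) (2*n) = 1"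
  using lead_coeff_power[of Wp n] by (simp add: degree_Wp_pow) (simp add: Wp_def)

lemma coeff_R: "coeff (R n) i = pochhammer (of_nat (Suc i)) n * coeff (Wp^n) (i+n)"
  by (simp add: R_def coeff_pderiv_iter)

lemma lead_R: "coeff (R n) n \<noteq> 0"
  using lead_Wp_pow[of n] by (simp add: coeff_R pochhammer_neq_0_mono mult_2 pochhammer_pos[THEN less_imp_neq, symmetric] )

lemma coeff_R_big: "n < i \<Longrightarrow> coeff (R n) i = 0"
  by (simp add: coeff_R coeff_eq_0 degree_Wp_pow)

lemma degree_R: "degree (R n) = n"
  using lead_R[of n] coeff_R_big[of n] by (meson le_degree leI degree_le antisym)

definition refl :: "real poly \<Rightarrow> real poly" where "refl p = pcompose p [:0,-1:]"

lemma refl_Wp: "refl (Wp^n) = Wp^n"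
proof -
  have "poly (refl (Wp^n)) = poly (Wp^n)"
    by (simp add: refl_def poly_pcompose Wp_def fun_eq_iff)
  then show ?thesis by (simp add: poly_eq_poly_eq_iff)
qed

lemma pderiv_refl: "pderiv (refl p) = - refl (pderiv p)"
  by (simp add: refl_def pderiv_pcompose pderiv_pCons)

lemma refl_smult: "refl (smult c p) = smult c (refl p)"
  by (simp add: refl_def pcompose_smult)

lemma refl_uminus: "refl (- p) = - refl p"
  by (simp add: refl_def pcompose_uminus)

lemma pderiv_iter_refl: "(pderiv^^j) (refl p) = smult ((-1)^j) (refl ((pderiv^^j) p))"
  by (induction j) (auto simp: pderiv_refl pderiv_smult pderiv_minus)

lemma R_refl: "R n = smult ((-1)^n) (refl (R n))"
  using pderiv_iter_refl[of n "Wp^n"] by (simp add: refl_Wp R_def)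

lemma coeff_R_parity: "odd (n + i) \<Longrightarrow> coeff (R n) i = 0"
proof -
  assume o: "odd (n+i)"
  have "coeff (R n) i = (-1)^n * ((-1)^i * coeff (R n) i)"
    by (subst R_refl) (simp add: refl_def coeff_pcompose_linear)
  also have "\<dots> = ((-1)^(n+i)) * coeff (R n) i" by (simp add: power_add)
  also have "\<dots> = - coeff (R n) i" using o by simp
  finally show ?thesis by simp
qed

lemma poly_R_neg: "poly (R n) (-1) = (-1)^n * poly (R n) 1"
  by (subst R_refl) (simp add: refl_def poly_pcompose)



lemma factor_W1:
  assumes "poly F 1 = 0" "poly F (-1) = (0::real)"
  shows "\<exists>G. F = [:1,0,-1:] * G"
proof -
  obtain S where S: "F = [:-1,1:] * S" using assms(1) by (auto simp: poly_eq_0_iff_dvd elim: dvdE)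
  have "poly S (-1) = 0" using assms(2) by (simp add: S)
  then obtain T where T: "S = [:-(-1),1:] * T" by (auto simp only: poly_eq_0_iff_dvd elim: dvdE)
  have "F = [:1,0,-1:] * (-T)" by (simp add: S T)
  then show ?thesis by blast
qed

lemma R_one_nz: "poly (R n) 1 \<noteq> 0"
proof
  assume z: "poly (R n) 1 = 0"
  then have "poly (R n) (-1) = 0" by (simp add: poly_R_neg)
  with z obtain G where G: "R n = [:1,0,-1:] * G" using factor_W1 by blast
  have Rnz: "R n \<noteq> 0" using lead_R[of n] by auto
  then have Gnz: "G \<noteq> 0" using G by auto
  have "degree (R n) = 2 + degree G" unfolding G using Gnz by (subst degree_mult_eq) auto
  then have "degree G < n" by (simp add: degree_R)
  then have "J (R n * G) = 0" by (rule R_orth)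
  then have "J ([:1,0,-1:] * G * G) = 0" by (simp add: G)
  then have "G = 0" by (rule J_wsq_zero)
  with Gnz show False by simp
qed

definition UU :: "nat \<Rightarrow> real" where "UU m = poly (R (m+1)) 1 / coeff (R (m+1)) (m+1)"
definition VV :: "nat \<Rightarrow> real" where "VV m = poly (R m) 1 / coeff (R m) m"

lemma UU_nz: "UU m \<noteq> 0" unfolding UU_def using R_one_nz lead_R by simp
lemma VV_nz: "VV m \<noteq> 0" unfolding VV_def using R_one_nz lead_R by simp

lemma edge_lemma:
  assumes m: "odd m" and deg: "degree p \<le> m + 1"
    and orth: "\<And>q. degree q \<le> m - 1 \<Longrightarrow> J (p * q) = 0"
  shows "poly p 1 = coeff p (m+1) * UU m + coeff p m * VV m"
    and "poly p (-1) = coeff p (m+1) * UU m - coeff p m * VV m"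
    and "coeff p (m+1) = 0 \<Longrightarrow> coeff p m = 0 \<Longrightarrow> p = 0"
proof -
  define \<beta> where "\<beta> = coeff p (m+1) / coeff (R (m+1)) (m+1)"
  define \<alpha> where "\<alpha> = coeff p m / coeff (R m) m"
  define r where "r = p - smult \<beta> (R (m+1)) - smult \<alpha> (R m)"
  have l1: "coeff (R (m+1)) (m+1) \<noteq> 0" and l0: "coeff (R m) m \<noteq> 0" using lead_R by auto
  have c1: "coeff (R (Suc m)) m = 0" by (rule coeff_R_parity) simp
  have "coeff r i = 0" if im: "i \<ge> m" for i
  proof -
    consider "i = m" | "i = m + 1" | "i > m + 1" using im by linarith
    then show ?thesis
    proof cases
      case 1 then show ?thesis using l0 by (simp add: r_def c1 \<alpha>_def coeff_R_big)
    next
      case 2 then show ?thesis using l1 by (simp add: r_def \<beta>_def coeff_R_big)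
    next
      case 3 then show ?thesis using deg by (simp add: r_def coeff_R_big coeff_eq_0)
    qed
  qed
  then have dr: "degree r \<le> m - 1" using m by (intro degree_le) auto
  have rr: "(p - smult \<beta> (R (m+1)) - smult \<alpha> (R m)) * r = p*r - smult \<beta> (R (m+1)*r) - smult \<alpha> (R m*r)"
    by (simp add: algebra_simps)
  then have rr': "r * r = p*r - smult \<beta> (R (m+1)*r) - smult \<alpha> (R m*r)"
    by (simp only: r_def[symmetric])
  have "J (r * r) = J (p * r) - \<beta> * J (R (m+1) * r) - \<alpha> * J (R m * r)"
    unfolding rr' by (simp add: J_minus J_smult)
  also have "\<dots> = 0"
  proof -
    have "degree r < m + 1" "degree r < m" using dr m by (auto elim: oddE)
    then show ?thesis using orth[OF dr] R_orth by simp
  qed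
  finally have "r = 0" by (rule J_sq_zero)
  then have p: "p = smult \<beta> (R (m+1)) + smult \<alpha> (R m)" by (simp add: r_def algebra_simps)
  have e1: "poly (R (Suc m)) (-1) = poly (R (Suc m)) 1" using m by (simp add: poly_R_neg)
  have e0: "poly (R m) (-1) = - poly (R m) 1" using m by (simp add: poly_R_neg)
  have b1: "\<beta> * poly (R (m+1)) 1 = coeff p (m+1) * UU m" by (simp add: \<beta>_def UU_def)
  have a1: "\<alpha> * poly (R m) 1 = coeff p m * VV m" by (simp add: \<alpha>_def VV_def)
  have v1: "poly p 1 = \<beta> * poly (R (m+1)) 1 + \<alpha> * poly (R m) 1" by (subst p) simp
  have v2: "poly p (-1) = \<beta> * poly (R (m+1)) 1 - \<alpha> * poly (R m) 1" by (subst p) (simp add: e1 e0)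
  show "poly p 1 = coeff p (m+1) * UU m + coeff p m * VV m"
    using v1 a1 b1 by simp
  show "poly p (-1) = coeff p (m+1) * UU m - coeff p m * VV m"
    using v2 a1 b1 by simp
  show "coeff p (m+1) = 0 \<Longrightarrow> coeff p m = 0 \<Longrightarrow> p = 0"
  proof -
    assume "coeff p (m+1) = 0" "coeff p m = 0"
    then have "\<alpha> = 0" "\<beta> = 0" by (simp_all add: \<alpha>_def \<beta>_def)
    then show "p = 0" using p by simp
  qed
qed



lemma poly_sum_upto: fixes p :: "real poly" assumes "degree p \<le> N" shows "poly p x = (\<Sum>i\<le>N. coeff p i * x^i)"
proof -
  have "(\<Sum>i\<le>degree p. coeff p i * x^i) = (\<Sum>i\<le>N. coeff p i * x^i)"
    by (rule sum.mono_neutral_left) (use assms in \<open>auto simp: coeff_eq_0\<close>)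
  with poly_altdef[of p x] show ?thesis by (rule trans)
qed

lemma polyW1: "poly [:1,0,-1:] (x::real) = 1 - x^2"
  by (simp add: power2_eq_square)

lemma W1_nz: "[:1,0,-1::real:] \<noteq> 0" by simp

lemma lead_bound:
  fixes P G :: "real poly"
  assumes PG: "P = [:1,0,-1:] * G" and nz: "coeff G i \<noteq> 0"
  shows "i + 2 \<le> degree P" and "coeff P (degree P) \<noteq> 0"
proof -
  have Gnz: "G \<noteq> 0" using nz by auto
  have "degree P = 2 + degree G" unfolding PG using Gnz by (subst degree_mult_eq) auto
  moreover have "i \<le> degree G" using nz by (rule le_degree)
  ultimately show "i + 2 \<le> degree P" by simp
  have "P \<noteq> 0" using Gnz PG by (metis W1_nz mult_eq_0_iff)
  then show "coeff P (degree P) \<noteq> 0" by simp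
qed

lemma interior:
  fixes c :: "nat \<Rightarrow> nat \<Rightarrow> real" and f :: "real \<Rightarrow> real \<Rightarrow> real"
  assumes supp: "\<And>i j. c i j \<noteq> 0 \<Longrightarrow> i + j \<le> N"
    and feq: "\<And>x y. f x y = (\<Sum>i\<le>N. \<Sum>j\<le>N. c i j * x^i * y^j)"
    and zx: "\<And>y. f 1 y = 0" "\<And>y. f (-1) y = 0"
    and zy: "\<And>x. f x 1 = 0" "\<And>x. f x (-1) = 0"
  shows "\<exists>d. (\<forall>i j. d i j \<noteq> 0 \<longrightarrow> i + j + 4 \<le> N) \<and>
     (\<forall>x y. f x y = (1 - x^2) * (1 - y^2) * (\<Sum>i\<le>N. \<Sum>j\<le>N. d i j * x^i * y^j))"
proof -
  define F where "F j = (\<Sum>i\<le>N. monom (c i j) i)" for j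
  have coeffF: "coeff (F j) l = (if l \<le> N then c l j else 0)" for j l
    by (simp add: F_def coeff_sum coeff_monom)
  have polyF: "poly (F j) x = (\<Sum>i\<le>N. c i j * x^i)" for j x
    by (simp add: F_def poly_sum poly_monom)
  have fF: "f x y = (\<Sum>j\<le>N. poly (F j) x * y^j)" for x y
  proof -
    have "f x y = (\<Sum>j\<le>N. \<Sum>i\<le>N. c i j * x^i * y^j)" unfolding feq by (rule sum.swap)
    then show ?thesis by (simp add: polyF sum_distrib_right)
  qed
  have rootF: "poly (F j) s = 0" if s: "s = 1 \<or> s = -1" for j s
  proof (cases "j \<le> N")
    case True
    have "\<forall>y. (\<Sum>j\<le>N. poly (F j) s * y^j) = 0" using s zx fF by auto
    then show ?thesis using True by (subst (asm) polyfun_eq_0) auto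
  next
    case False
    then have "c i j = 0" for i using supp by force
    then show ?thesis by (simp add: polyF)
  qed
  have "\<forall>j. \<exists>G. F j = [:1,0,-1:] * G"
    using rootF factor_W1 by blast
  then obtain G where G: "\<And>j. F j = [:1,0,-1:] * G j" by metis
  have suppG: "i + j + 2 \<le> N" if nz: "coeff (G j) i \<noteq> 0" for i j
  proof -
    have a: "i + 2 \<le> degree (F j)" and b: "coeff (F j) (degree (F j)) \<noteq> 0"
      using lead_bound[OF G nz] by auto
    from b have "degree (F j) \<le> N" "c (degree (F j)) j \<noteq> 0" by (auto simp: coeffF split: if_splits)
    then have "degree (F j) + j \<le> N" using supp by blast
    with a show ?thesis by simp
  qed
  have degG: "degree (G j) \<le> N" for j
    by (rule degree_le) (use suppG in force)
  have fG: "f x y = (1 - x^2) * (\<Sum>j\<le>N. poly (G j) x * y^j)" for x y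
    by (simp add: fF G sum_distrib_left) (simp add: power2_eq_square algebra_simps)
  have Hz: "(\<Sum>j\<le>N. s^j * coeff (G j) i) = 0" if s: "s = 1 \<or> s = -1" for s i
  proof -
    define H where "H = (\<Sum>j\<le>N. smult (s^j) (G j))"
    have "poly ([:1,0,-1:] * H) x = f x s" for x
      by (simp add: H_def fG poly_sum sum_distrib_left) (simp add: power2_eq_square algebra_simps)
    also have "f x s = 0" for x using s zy by auto
    finally have "poly ([:1,0,-1:] * H) = poly 0" by (simp add: fun_eq_iff)
    then have "[:1,0,-1:] * H = 0" by (simp only: poly_eq_poly_eq_iff)
    then have "H = 0" using W1_nz by (simp only: mult_eq_0_iff) blast
    then have "coeff H i = 0" by simp
    then show ?thesis by (simp add: H_def coeff_sum)
  qed
  define E where "E i = (\<Sum>j\<le>N. monom (coeff (G j) i) j)" for i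
  have coeffE: "coeff (E i) l = (if l \<le> N then coeff (G l) i else 0)" for i l
    by (simp add: E_def coeff_sum coeff_monom)
  have polyE: "poly (E i) y = (\<Sum>j\<le>N. coeff (G j) i * y^j)" for i y
    by (simp add: E_def poly_sum poly_monom)
  have "poly (E i) 1 = 0" for i using Hz[of 1 i] by (simp add: polyE)
  moreover have "poly (E i) (-1) = 0" for i using Hz[of "-1" i] by (simp add: polyE mult_ac)
  ultimately have "\<forall>i. \<exists>D. E i = [:1,0,-1:] * D" using factor_W1 by blast
  then obtain D where D: "\<And>i. E i = [:1,0,-1:] * D i" by metis
  have suppD: "i + j + 4 \<le> N" if nz: "coeff (D i) j \<noteq> 0" for i j
  proof -
    have a: "j + 2 \<le> degree (E i)" and b: "coeff (E i) (degree (E i)) \<noteq> 0"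
      using lead_bound[OF D nz] by auto
    from b have "coeff (G (degree (E i))) i \<noteq> 0" by (auto simp: coeffE split: if_splits)
    then have "i + degree (E i) + 2 \<le> N" by (rule suppG)
    with a show ?thesis by simp
  qed
  have degD: "degree (D i) \<le> N" for i
    by (rule degree_le) (use suppD in force)
  have final: "f x y = (1 - x^2) * (1 - y^2) * (\<Sum>i\<le>N. \<Sum>j\<le>N. coeff (D i) j * x^i * y^j)" for x y
  proof -
    have "f x y = (1 - x^2) * (\<Sum>j\<le>N. \<Sum>i\<le>N. coeff (G j) i * x^i * y^j)"
      by (simp add: fG poly_sum_upto[OF degG] sum_distrib_right)
    also have "\<dots> = (1 - x^2) * (\<Sum>i\<le>N. \<Sum>j\<le>N. coeff (G j) i * x^i * y^j)"
      by (subst sum.swap) simp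
    also have "\<dots> = (1 - x^2) * (\<Sum>i\<le>N. x^i * poly (E i) y)"
      by (simp add: polyE sum_distrib_left mult_ac)
    also have "\<dots> = (1 - x^2) * (\<Sum>i\<le>N. x^i * ((1 - y^2) * (\<Sum>j\<le>N. coeff (D i) j * y^j)))"
      by (simp add: D poly_sum_upto[OF degD]) (simp add: power2_eq_square algebra_simps)
    also have "\<dots> = (1 - x^2) * (1 - y^2) * (\<Sum>i\<le>N. \<Sum>j\<le>N. coeff (D i) j * x^i * y^j)"
      by (simp add: sum_distrib_left mult_ac)
    finally show ?thesis .
  qed
  show ?thesis
    by (rule exI[of _ "\<lambda>i j. coeff (D i) j"]) (use suppD final in auto)
qed



lemma finS: "finite {(i::nat, j::nat). i + j \<le> n}"
  by (rule finite_subset[of _ "{..n} \<times> {..n}"]) auto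

lemma sumS_fst: "(\<Sum>(i,j)\<in>{(i::nat, j::nat). i + j \<le> m}. if i = m then g i j else (0::real)) = g m 0"
proof -
  have "(\<Sum>(i,j)\<in>{(i::nat, j::nat). i + j \<le> m}. if i = m then g i j else (0::real))
      = (\<Sum>x\<in>{(i::nat, j::nat). i + j \<le> m}. if x = (m,0) then g m 0 else 0)"
    by (rule sum.cong) (auto split: if_splits)
  also have "\<dots> = g m 0" by (simp add: finS)
  finally show ?thesis .
qed

lemma sumS_snd: "(\<Sum>(i,j)\<in>{(i::nat, j::nat). i + j \<le> m}. if j = m then g i j else (0::real)) = g 0 m"
proof -
  have "(\<Sum>(i,j)\<in>{(i::nat, j::nat). i + j \<le> m}. if j = m then g i j else (0::real))
      = (\<Sum>x\<in>{(i::nat, j::nat). i + j \<le> m}. if x = (0,m) then g 0 m else 0)"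
    by (rule sum.cong) (auto split: if_splits)
  also have "\<dots> = g 0 m" by (simp add: finS)
  finally show ?thesis .
qed

lemma sumS_fst_big: "m < l \<Longrightarrow> (\<Sum>(i,j)\<in>{(i::nat, j::nat). i + j \<le> m}. if i = l then g i j else (0::real)) = 0"
  by (rule sum.neutral) auto

lemma sumS_snd_big: "m < l \<Longrightarrow> (\<Sum>(i,j)\<in>{(i::nat, j::nat). i + j \<le> m}. if j = l then g i j else (0::real)) = 0"
  by (rule sum.neutral) auto

lemma sumS_conv:
  assumes "n \<le> N"
  shows "(\<Sum>(i,j)\<in>{(i::nat, j::nat). i + j \<le> n}. g i j) = (\<Sum>i\<le>N. \<Sum>j\<le>N. if i + j \<le> n then g i j else (0::real))"
proof -
  have "(\<Sum>i\<le>N. \<Sum>j\<le>N. if i + j \<le> n then g i j else (0::real))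
      = (\<Sum>(i,j)\<in>{..N} \<times> {..N}. if i + j \<le> n then g i j else 0)"
    by (rule sum.cartesian_product)
  also have "\<dots> = (\<Sum>(i,j)\<in>{(i::nat, j::nat). i + j \<le> n}. g i j)"
    by (rule sum.mono_neutral_cong_right) (use assms in \<open>auto split: if_splits\<close>)
  finally show ?thesis by simp
qed



abbreviation SS :: "nat \<Rightarrow> (nat \<times> nat) set" where "SS n \<equiv> {(i, j). i + j \<le> n}"

lemma poly_sumS_fst: fixes f :: "nat \<Rightarrow> nat \<Rightarrow> real" shows "poly (\<Sum>(i,j)\<in>SS m. monom (f i j) i) x = (\<Sum>(i,j)\<in>SS m. f i j * x^i)"
  unfolding poly_sum by (rule sum.cong) (auto simp: poly_monom)
lemma poly_sumS_snd: fixes f :: "nat \<Rightarrow> nat \<Rightarrow> real" shows "poly (\<Sum>(i,j)\<in>SS m. monom (f i j) j) x = (\<Sum>(i,j)\<in>SS m. f i j * x^j)"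
  unfolding poly_sum by (rule sum.cong) (auto simp: poly_monom)
lemma coeff_sumS_fst: fixes f :: "nat \<Rightarrow> nat \<Rightarrow> real" shows "coeff (\<Sum>(i,j)\<in>SS m. monom (f i j) i) l = (\<Sum>(i,j)\<in>SS m. if i = l then f i j else 0)"
  unfolding coeff_sum by (rule sum.cong) (auto simp: coeff_monom)
lemma coeff_sumS_snd: fixes f :: "nat \<Rightarrow> nat \<Rightarrow> real" shows "coeff (\<Sum>(i,j)\<in>SS m. monom (f i j) j) l = (\<Sum>(i,j)\<in>SS m. if j = l then f i j else 0)"
  unfolding coeff_sum by (rule sum.cong) (auto simp: coeff_monom)

definition vf :: "(nat \<Rightarrow> nat \<Rightarrow> real) \<Rightarrow> real \<Rightarrow> real \<Rightarrow> nat \<Rightarrow> real \<Rightarrow> real \<Rightarrow> real" where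
  "vf c a b m x y = (\<Sum>(i,j)\<in>SS m. c i j * x^i * y^j) + a*(x^m*y - x*y^m) + b*(x^(m+1) - y^(m+1))"

definition HB :: "(nat \<Rightarrow> nat \<Rightarrow> real) \<Rightarrow> real \<Rightarrow> real \<Rightarrow> nat \<Rightarrow> real \<Rightarrow> real poly" where
  "HB c a b m y0 = (\<Sum>(i,j)\<in>SS m. monom (c i j * y0^j) i) + smult (a*y0) (monom 1 m)
     - smult (a*y0^m) (monom 1 1) + monom b (m+1) - [:b*y0^(m+1):]"

definition VB :: "(nat \<Rightarrow> nat \<Rightarrow> real) \<Rightarrow> real \<Rightarrow> real \<Rightarrow> nat \<Rightarrow> real \<Rightarrow> real poly" where
  "VB c a b m x0 = (\<Sum>(i,j)\<in>SS m. monom (c i j * x0^i) j) + smult (a*x0^m) (monom 1 1)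
     - smult (a*x0) (monom 1 m) + [:b*x0^(m+1):] - monom b (m+1)"

lemma poly_HB: "poly (HB c a b m y0) x = vf c a b m x y0"
proof -
  have "(\<Sum>(i,j)\<in>SS m. c i j * y0^j * x^i) = (\<Sum>(i,j)\<in>SS m. c i j * x^i * y0^j)"
    by (rule sum.cong) (auto simp: mult_ac)
  then show ?thesis
    by (simp add: HB_def vf_def poly_sumS_fst poly_monom algebra_simps)
qed

lemma poly_VB: "poly (VB c a b m x0) y = vf c a b m x0 y"
proof -
  have "(\<Sum>(i,j)\<in>SS m. c i j * x0^i * y^j) = (\<Sum>(i,j)\<in>SS m. c i j * x0^i * y^j)" ..
  then show ?thesis
    by (simp add: VB_def vf_def poly_sumS_snd poly_monom algebra_simps)
qed

lemma coeff_HB: "coeff (HB c a b m y0) l = (\<Sum>(i,j)\<in>SS m. if i = l then c i j * y0^j else 0)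
   + (if l = m then a*y0 else 0) - (if l = 1 then a*y0^m else 0) + (if l = m+1 then b else 0)
   - (if l = 0 then b*y0^(m+1) else 0)"
  by (simp add: HB_def coeff_sumS_fst coeff_monom coeff_pCons split: nat.splits)

lemma coeff_VB: "coeff (VB c a b m x0) l = (\<Sum>(i,j)\<in>SS m. if j = l then c i j * x0^i else 0)
   + (if l = 1 then a*x0^m else 0) - (if l = m then a*x0 else 0) + (if l = 0 then b*x0^(m+1) else 0)
   - (if l = m+1 then b else 0)"
  by (simp add: VB_def coeff_sumS_snd coeff_monom coeff_pCons split: nat.splits)

lemma degree_HB: "1 \<le> m \<Longrightarrow> degree (HB c a b m y0) \<le> m + 1"
  by (rule degree_le) (simp add: coeff_HB sumS_fst_big)

lemma degree_VB: "1 \<le> m \<Longrightarrow> degree (VB c a b m x0) \<le> m + 1"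
  by (rule degree_le) (simp add: coeff_VB sumS_snd_big)

lemma coeff_HB_top: "1 \<le> m \<Longrightarrow> coeff (HB c a b m y0) (m+1) = b"
  by (simp add: coeff_HB sumS_fst_big)

lemma coeff_VB_top: "1 \<le> m \<Longrightarrow> coeff (VB c a b m x0) (m+1) = -b"
  by (simp add: coeff_VB sumS_snd_big)

lemma coeff_HB_m: "odd m \<Longrightarrow> y0 = 1 \<or> y0 = -1 \<Longrightarrow>
   coeff (HB c a b m y0) m = c m 0 + (if m = 1 then 0 else a) * y0"
  using sumS_fst[of m "\<lambda>i j. c i j * y0^j"] by (auto simp: coeff_HB)

lemma coeff_VB_m: "odd m \<Longrightarrow> x0 = 1 \<or> x0 = -1 \<Longrightarrow>
   coeff (VB c a b m x0) m = c 0 m - (if m = 1 then 0 else a) * x0"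
  using sumS_snd[of m "\<lambda>i j. c i j * x0^i"] by (auto simp: coeff_VB)



theorem theorem3p5:
  fixes k :: nat and I :: "(real \<times> real) set" and v :: "real \<times> real \<Rightarrow> real"
  assumes I_small: "k \<le> 1 \<Longrightarrow> I = {}"
    and I_big: "k \<ge> 2 \<Longrightarrow> finite I \<and> card I = (2 * k - 1) * (k - 1)
                  \<and> I \<subseteq> Khat_interior \<and> unisolvent I (P2 (2 * k - 3))"
    and v_ER: "v \<in> ER (2 * k + 1)"
    and v_edge: "\<And>\<gamma> q. \<gamma> \<in> edges \<Longrightarrow> degree q \<le> 2 * k \<Longrightarrow>
                  integral {-1..1} (\<lambda>t. v (\<gamma> t) * poly q t) = 0"
    and v_I: "\<And>z. z \<in> I \<Longrightarrow> v z = 0"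
  shows "\<forall>z\<in>Khat. v z = 0"
proof -
  define m where "m = 2*k+1"
  have m1: "1 \<le> m" and modd: "odd m" and mk: "m - 1 = 2*k" by (auto simp: m_def)
  from v_ER obtain p a b where pP: "p \<in> P2 m"
    and vdef: "\<And>x y. v (x,y) = p (x,y) + a*(x^m*y - x*y^m) + b*(x^(m+1) - y^(m+1))"
    unfolding ER_def m_def by blast
  from pP obtain c where pc: "\<And>x y. p (x,y) = (\<Sum>(i,j)\<in>SS m. c i j * x^i * y^j)"
    unfolding P2_def by blast
  have vv: "v (x,y) = vf c a b m x y" for x y by (simp add: vdef pc vf_def)
  have edgeH: "J (HB c a b m y0 * q) = 0" if y0: "y0 = 1 \<or> y0 = -1" and dq: "degree q \<le> m - 1" for y0 q
  proof -
    have g: "(\<lambda>t. (t, y0)) \<in> edges" using y0 by (auto simp: edges_def)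
    have "integral {-1..1} (\<lambda>t. v ((\<lambda>t. (t, y0)) t) * poly q t) = 0"
      by (rule v_edge[OF g]) (use dq mk in simp)
    moreover have "(\<lambda>t. poly (HB c a b m y0 * q) t) = (\<lambda>t. v ((\<lambda>t. (t, y0)) t) * poly q t)"
      by (simp add: fun_eq_iff poly_HB vv)
    ultimately show ?thesis by (simp add: J_def)
  qed
  have edgeV: "J (VB c a b m x0 * q) = 0" if x0: "x0 = 1 \<or> x0 = -1" and dq: "degree q \<le> m - 1" for x0 q
  proof -
    have g: "(\<lambda>t. (x0, t)) \<in> edges" using x0 by (auto simp: edges_def)
    have "integral {-1..1} (\<lambda>t. v ((\<lambda>t. (x0, t)) t) * poly q t) = 0"
      by (rule v_edge[OF g]) (use dq mk in simp)
    moreover have "(\<lambda>t. poly (VB c a b m x0 * q) t) = (\<lambda>t. v ((\<lambda>t. (x0, t)) t) * poly q t)"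
      by (simp add: fun_eq_iff poly_VB vv)
    ultimately show ?thesis by (simp add: J_def)
  qed
  define aa where "aa = (if m = 1 then 0 else a)"
  define X where "X = c m 0"
  define Y where "Y = c 0 m"
  define U where "U = UU m"
  define V where "V = VV m"
  have EH: "poly (HB c a b m y0) 1 = b * U + (X + aa*y0) * V"
           "poly (HB c a b m y0) (-1) = b * U - (X + aa*y0) * V"
           "b = 0 \<Longrightarrow> X + aa*y0 = 0 \<Longrightarrow> HB c a b m y0 = 0"
    if y0: "y0 = 1 \<or> y0 = -1" for y0
  proof -
    note L = edge_lemma[OF modd degree_HB[OF m1] edgeH[OF y0]]
    have t: "coeff (HB c a b m y0) (m+1) = b" by (rule coeff_HB_top[OF m1])
    have mm: "coeff (HB c a b m y0) m = X + aa*y0" using coeff_HB_m[OF modd y0] by (simp add: X_def aa_def)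
    show "poly (HB c a b m y0) 1 = b * U + (X + aa*y0) * V"
         "poly (HB c a b m y0) (-1) = b * U - (X + aa*y0) * V"
         "b = 0 \<Longrightarrow> X + aa*y0 = 0 \<Longrightarrow> HB c a b m y0 = 0"
      using L unfolding t mm U_def[symmetric] V_def[symmetric] by auto
  qed
  have EV: "poly (VB c a b m x0) 1 = - b * U + (Y - aa*x0) * V"
           "poly (VB c a b m x0) (-1) = - b * U - (Y - aa*x0) * V"
           "b = 0 \<Longrightarrow> Y - aa*x0 = 0 \<Longrightarrow> VB c a b m x0 = 0"
    if x0: "x0 = 1 \<or> x0 = -1" for x0
  proof -
    note L = edge_lemma[OF modd degree_VB[OF m1] edgeV[OF x0]]
    have t: "coeff (VB c a b m x0) (m+1) = - b" by (rule coeff_VB_top[OF m1])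
    have mm: "coeff (VB c a b m x0) m = Y - aa*x0" using coeff_VB_m[OF modd x0] by (simp add: Y_def aa_def)
    show "poly (VB c a b m x0) 1 = - b * U + (Y - aa*x0) * V"
         "poly (VB c a b m x0) (-1) = - b * U - (Y - aa*x0) * V"
         "b = 0 \<Longrightarrow> Y - aa*x0 = 0 \<Longrightarrow> VB c a b m x0 = 0"
      using L unfolding t mm U_def[symmetric] V_def[symmetric] by auto
  qed
  have c1: "poly (HB c a b m (-1)) 1 = poly (VB c a b m 1) (-1)" by (simp add: poly_HB poly_VB)
  have c2: "poly (HB c a b m (-1)) (-1) = poly (VB c a b m (-1)) (-1)" by (simp add: poly_HB poly_VB)
  have c3: "poly (HB c a b m 1) 1 = poly (VB c a b m 1) 1" by (simp add: poly_HB poly_VB)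
  have c4: "poly (HB c a b m 1) (-1) = poly (VB c a b m (-1)) 1" by (simp add: poly_HB poly_VB)
  define P where "P = b * U"
  define Q where "Q = aa * V"
  define XV where "XV = X * V"
  define YV where "YV = Y * V"
  have q1: "P + XV - Q = - P - YV + Q"
    using c1 EH(1)[of "-1"] EV(2)[of 1] by (simp add: P_def Q_def XV_def YV_def algebra_simps)
  have q2: "P - XV + Q = - P - YV - Q"
    using c2 EH(2)[of "-1"] EV(2)[of "-1"] by (simp add: P_def Q_def XV_def YV_def algebra_simps)
  have q3: "P + XV + Q = - P + YV - Q"
    using c3 EH(1)[of 1] EV(1)[of 1] by (simp add: P_def Q_def XV_def YV_def algebra_simps)
  have q4: "P - XV - Q = - P + YV + Q"
    using c4 EH(2)[of 1] EV(1)[of "-1"] by (simp add: P_def Q_def XV_def YV_def algebra_simps)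
  have "P = 0" "Q = 0" "XV = 0" "YV = 0" using q1 q2 q3 q4 by linarith+
  then have "b * U = 0 \<and> aa * V = 0 \<and> X * V = 0 \<and> Y * V = 0"
    by (simp add: P_def Q_def XV_def YV_def)
  then have b0: "b = 0" and aa0: "aa = 0" and X0: "X = 0" and Y0: "Y = 0"
    using UU_nz VV_nz by (auto simp: U_def V_def)
  have HB0: "HB c a b m y0 = 0" if "y0 = 1 \<or> y0 = -1" for y0
    using EH(3)[OF that] b0 aa0 X0 by simp
  have VB0: "VB c a b m x0 = 0" if "x0 = 1 \<or> x0 = -1" for x0
    using EV(3)[OF that] b0 aa0 Y0 by simp
  have zx: "v (1, y) = 0" "v (-1, y) = 0" for y
    using VB0[of 1] VB0[of "-1"] by (auto simp: vv poly_VB[symmetric])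
  have zy: "v (x, 1) = 0" "v (x, -1) = 0" for x
    using HB0[of 1] HB0[of "-1"] by (auto simp: vv poly_HB[symmetric])
  have vp: "v (x,y) = (\<Sum>(i,j)\<in>SS m. c i j * x^i * y^j)" for x y
  proof -
    have "a*(x^m*y - x*y^m) = 0"
      using aa0 by (cases "m = 1") (auto simp: aa_def)
    then show ?thesis by (simp add: vv vf_def b0)
  qed
  have feq: "v (x,y) = (\<Sum>i\<le>m. \<Sum>j\<le>m. (if i + j \<le> m then c i j else 0) * x^i * y^j)" for x y
    unfolding vp sumS_conv[OF order_refl] by (intro sum.cong) auto
  have "\<exists>d. (\<forall>i j. d i j \<noteq> 0 \<longrightarrow> i + j + 4 \<le> m) \<and>
     (\<forall>x y. v (x,y) = (1 - x^2) * (1 - y^2) * (\<Sum>i\<le>m. \<Sum>j\<le>m. d i j * x^i * y^j))"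
    by (rule interior[of "\<lambda>i j. if i + j \<le> m then c i j else 0" m "\<lambda>x y. v (x,y)"])
       (auto simp: feq[symmetric] zx zy split: if_splits)
  then obtain d where dsupp: "\<And>i j. d i j \<noteq> 0 \<Longrightarrow> i + j + 4 \<le> m"
    and dv: "\<And>x y. v (x,y) = (1 - x^2) * (1 - y^2) * (\<Sum>i\<le>m. \<Sum>j\<le>m. d i j * x^i * y^j)"
    by blast
  define w where "w = (\<lambda>(x::real, y::real). \<Sum>i\<le>m. \<Sum>j\<le>m. d i j * x^i * y^j)"
  have w0: "w = (\<lambda>_. 0)"
  proof (cases "k \<le> 1")
    case True
    then have "d i j = 0" for i j using dsupp[of i j] by (auto simp: m_def)
    then show ?thesis by (simp add: w_def fun_eq_iff)
  next
    case False
    then have Ib: "I \<subseteq> Khat_interior" "unisolvent I (P2 (2 * k - 3))" using I_big by auto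
    have "w \<in> P2 (2*k-3)"
    proof -
      have "w (x,y) = (\<Sum>(i,j)\<in>SS (2*k-3). d i j * x^i * y^j)" for x y
      proof -
        have "(\<Sum>(i,j)\<in>SS (2*k-3). d i j * x^i * y^j)
           = (\<Sum>i\<le>m. \<Sum>j\<le>m. if i + j \<le> 2*k-3 then d i j * x^i * y^j else 0)"
          by (rule sumS_conv) (simp add: m_def)
        also have "\<dots> = (\<Sum>i\<le>m. \<Sum>j\<le>m. d i j * x^i * y^j)"
        proof (intro sum.cong refl)
          fix i j
          show "(if i + j \<le> 2*k-3 then d i j * x^i * y^j else 0) = d i j * x^i * y^j"
          proof (cases "d i j = 0")
            case False
            then have "i + j + 4 \<le> 2*k+1" using dsupp[of i j] by (simp add: m_def)
            then show ?thesis by simp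
          qed simp
        qed
        also have "\<dots> = w (x,y)" by (simp add: w_def)
        finally show ?thesis by simp
      qed
      then show ?thesis unfolding P2_def by blast
    qed
    moreover have "(\<lambda>_. 0) \<in> P2 (2*k-3)" unfolding P2_def
      by (rule CollectI, rule exI[of _ "\<lambda>i j. 0"]) simp
    moreover have "w z = 0" if z: "z \<in> I" for z
    proof -
      obtain x y where xy: "z = (x,y)" by fastforce
      have r: "-1 < x" "x < 1" "-1 < y" "y < 1" using Ib(1) z xy by (auto simp: Khat_interior_def)
      have "0 < (1-x)*(1+x)" "0 < (1-y)*(1+y)" using r by (auto intro: mult_pos_pos)
      then have "0 < 1 - x^2" "0 < 1 - y^2" by (simp_all add: power2_eq_square algebra_simps)
      then have "0 < (1 - x^2) * (1 - y^2)" by (rule mult_pos_pos)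
      then have nz: "(1 - x^2) * (1 - y^2) \<noteq> 0" by (rule less_imp_neq[symmetric])
      have "v (x,y) = 0" using v_I z xy by simp
      then show ?thesis using dv[of x y] nz by (simp add: w_def xy)
    qed
    ultimately show ?thesis using Ib(2) unfolding unisolvent_def by auto
  qed
  have "v z = 0" for z
  proof -
    obtain x y where xy: "z = (x,y)" by fastforce
    have "w (x,y) = 0" using w0 by simp
    then show ?thesis using dv[of x y] by (simp add: w_def xy)
  qed
  then show ?thesis by simp
qed

end
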